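(* Let $D\ge1$, $f\in(0,1]$, and let $F=(F_{\alpha\beta})_{\alpha,\beta=1}^D$ be a real symmetric matrix with $f\le F_{\alpha\beta}\le1$ for all $\alpha,\beta$. Let $\{|\alpha\rangle\}$ be an orthonormal basis of $\mathbb C^D$ and define on $\mathbb C^D\otimes\mathbb C^D$ the operator $K=\frac1D\sum_{\alpha,\beta}F_{\alpha\beta}^2\,|\alpha,\alpha\rangle\langle\beta,\beta|$. Then $K$ has a unique (up to scalar) eigenvector $|\Psi\rangle=\sum_\alpha x_\alpha|\alpha,\alpha\rangle$ of largest eigenvalue $\lambda$, with all $x_\alpha>0$, $\max_\alpha x_\alpha/\min_\alpha x_\alpha\le 1/f^2$, and $f^2\le\lambda\le1$; moreover every other eigenvalue of $K$ is at most $(1-f^4)\lambda$. Consequently, for any real $a$, $\varepsilon>0$, the operator $M=a\,\mathbb I+\varepsilon^2 K$ (restricted to $\mathbb C^D\otimes\mathbb C^D$) has unique top eigenvector $|\Psi\rangle$ with eigenvalue $a+\varepsilon^2\lambda$, and spectral gap at least $\varepsilon^2f^4\lambda$. *)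

theory Defs
  imports "HOL-Analysis.Analysis"
begin

text \<open>C^D is modelled as complex^'n with D = CARD('n); C^D (x) C^D as complex^('n \<times> 'n).\<close>

definition tensor :: "complex ^ 'n \<Rightarrow> complex ^ 'n \<Rightarrow> complex ^ ('n \<times> 'n)" where
  "tensor u v = (\<chi> p. u $ fst p * v $ snd p)"

definition outer :: "complex ^ 'm \<Rightarrow> complex ^ 'm \<Rightarrow> complex ^ 'm ^ 'm" where
  "outer u v = (\<chi> p q. u $ p * cnj (v $ q))"

text \<open>An orthonormal family indexed by 'n in complex^'n (hence an orthonormal basis).\<close>
definition orthonormal_family :: "('n::finite \<Rightarrow> complex ^ 'n) \<Rightarrow> bool" where
  "orthonormal_family b \<longleftrightarrow>
     (\<forall>\<alpha> \<beta>. (\<Sum>i\<in>UNIV. cnj (b \<alpha> $ i) * b \<beta> $ i) = (if \<alpha> = \<beta> then 1 else 0))"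

definition Kop :: "real ^ 'n ^ 'n \<Rightarrow> ('n::finite \<Rightarrow> complex ^ 'n) \<Rightarrow> complex ^ ('n \<times> 'n) ^ ('n \<times> 'n)" where
  "Kop F b = (\<Sum>\<alpha>\<in>UNIV. \<Sum>\<beta>\<in>UNIV.
      (((F $ \<alpha> $ \<beta>)\<^sup>2) / real CARD('n)) *\<^sub>R outer (tensor (b \<alpha>) (b \<alpha>)) (tensor (b \<beta>) (b \<beta>)))"

definition is_eigenpair :: "complex ^ 'm ^ 'm \<Rightarrow> complex \<Rightarrow> complex ^ 'm \<Rightarrow> bool" where
  "is_eigenpair A \<mu> v \<longleftrightarrow> v \<noteq> 0 \<and> A *v v = \<mu> *s v"

end

theory Submission
  imports Defs "HOL-Analysis.Analysis"
begin


definition qf :: "('n::finite \<Rightarrow> 'n \<Rightarrow> real) \<Rightarrow> ('n \<Rightarrow> real) \<Rightarrow> real" where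
  "qf A u = (\<Sum>i\<in>UNIV. \<Sum>j\<in>UNIV. A i j * u i * u j)"

lemma norm_vec_sq: "(norm (y::real^'n))^2 = (\<Sum>i\<in>UNIV. (y$i)^2)"
  by (simp add: norm_vec_def L2_set_def sum_nonneg)

lemma qf_cont: "continuous_on S (\<lambda>y::real^'n. qf A (\<lambda>i. y$i))"
  unfolding qf_def by (intro continuous_intros)

lemma exists_max:
  fixes A :: "'n::finite \<Rightarrow> 'n \<Rightarrow> real"
  shows "\<exists>z::'n\<Rightarrow>real. (\<Sum>i\<in>UNIV. (z i)^2) = 1 \<and> (\<forall>u. (\<Sum>i\<in>UNIV. (u i)^2) = 1 \<longrightarrow> qf A u \<le> qf A z)"
proof -
  have ne: "sphere (0::real^'n) 1 \<noteq> {}" by simp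
  obtain z where z: "z \<in> sphere (0::real^'n) 1" and zm: "\<forall>y\<in>sphere 0 1. qf A (\<lambda>i. y$i) \<le> qf A (\<lambda>i. z$i)"
    using continuous_attains_sup[OF compact_sphere ne qf_cont] by blast
  show ?thesis
  proof (intro exI conjI allI impI)
    have "norm z = 1" using z by simp
    then show "(\<Sum>i\<in>UNIV. (z$i)^2) = 1" using norm_vec_sq[of z] by simp
    fix u :: "'n \<Rightarrow> real" assume u: "(\<Sum>i\<in>UNIV. (u i)^2) = 1"
    have "(norm (\<chi> i. u i))^2 = 1" using norm_vec_sq[of "\<chi> i. u i"] u by simp
    then have "norm (\<chi> i. u i) = 1" using norm_ge_zero[of "\<chi> i. u i"]
      by (simp add: power2_eq_1_iff)
    then have "(\<chi> i. u i) \<in> sphere (0::real^'n) 1" by simp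
    then have "qf A (\<lambda>i. (\<chi> i. u i) $ i) \<le> qf A (\<lambda>i. z$i)" using zm by blast
    then show "qf A u \<le> qf A (\<lambda>i. z$i)" by simp
  qed
qed

lemma qf_scale: "qf A (\<lambda>i. u i / r) = qf A u / r^2"
  by (simp add: qf_def sum_divide_distrib power2_eq_square)

lemma qf_le:
  fixes A :: "'n::finite \<Rightarrow> 'n \<Rightarrow> real"
  assumes m: "\<forall>u. (\<Sum>i\<in>UNIV. (u i)^2) = 1 \<longrightarrow> qf A u \<le> lam"
  shows "qf A u \<le> lam * (\<Sum>i\<in>UNIV. (u i)^2)"
proof (cases "(\<Sum>i\<in>UNIV. (u i)^2) = 0")
  case True
  then have "\<forall>i. u i = 0" by (simp add: sum_nonneg_eq_0_iff)
  then show ?thesis using True by (simp add: qf_def)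
next
  case False
  define s where "s = (\<Sum>i\<in>UNIV. (u i)^2)"
  have s: "s > 0" using False s_def by (simp add: sum_nonneg order_le_neq_trans)
  define r where "r = sqrt s"
  have r: "r > 0" "r^2 = s" using s by (auto simp: r_def)
  have "(\<Sum>i\<in>UNIV. (u i / r)^2) = s / r^2"
    by (simp add: s_def power_divide sum_divide_distrib)
  also have "\<dots> = 1" using r s by simp
  finally have "qf A (\<lambda>i. u i / r) \<le> lam" using m[rule_format, of "\<lambda>i. u i / r"] by blast
  then have "qf A u / r^2 \<le> lam" by (simp add: qf_scale)
  then show ?thesis using r s by (simp add: s_def[symmetric] divide_le_eq)
qed

lemma quad_zero:
  fixes a c :: real
  assumes "\<forall>t. 2 * t * a + t^2 * c \<le> 0"
  shows "a = 0"
proof -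
  define d where "d = \<bar>c\<bar> + 1"
  have d: "d > 0" by (simp add: d_def)
  have "2 * (a/d) * a + (a/d)^2 * c \<le> 0" using assms by blast
  then have "a^2 * (2 * d + c) / d^2 \<le> 0" using d
    by (simp add: field_simps power2_eq_square)
  moreover have "2 * d + c > 0" by (simp add: d_def)
  ultimately have "a^2 \<le> 0" using d
    by (smt (verit, ccfv_SIG) divide_pos_pos mult_pos_pos zero_less_power zero_less_power2)
  then show ?thesis by simp
qed

lemma variational:
  fixes A :: "'n::finite \<Rightarrow> 'n \<Rightarrow> real"
  assumes sym: "\<And>i j. A i j = A j i"
    and le: "\<And>u. qf A u \<le> lam * (\<Sum>i\<in>UNIV. (u i)^2)"
    and w1: "(\<Sum>i\<in>UNIV. (w i)^2) = 1" and wq: "qf A w = lam"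
  shows "(\<Sum>j\<in>UNIV. A k j * w j) = lam * w k"
proof -
  have "\<forall>t. 2 * t * ((\<Sum>j\<in>UNIV. A k j * w j) - lam * w k) + t^2 * (A k k - lam) \<le> 0"
  proof
    fix t :: real
    define u where "u i = w i + t * (if i = k then 1 else 0)" for i
    have e1: "A i j * u i * u j = A i j * w i * w j + t * (if j = k then A i j * w i else 0)
       + t * (if i = k then A i j * w j else 0) + t^2 * (if i = k \<and> j = k then A i j else 0)" for i j
      by (simp add: u_def algebra_simps power2_eq_square)
    have "qf A u = qf A w + t * (\<Sum>i\<in>UNIV. A i k * w i) + t * (\<Sum>j\<in>UNIV. A k j * w j) + t^2 * A k k"
    proof -
      have h1: "(\<Sum>j\<in>UNIV. if i = k then A i j * w j else 0) = (if i = k then (\<Sum>j\<in>UNIV. A k j * w j) else 0)" for i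
        by auto
      have h2: "(\<Sum>j\<in>UNIV. if i = k \<and> j = k then A i j else 0) = (if i = k then A k k else 0)" for i
        by auto
      show ?thesis unfolding qf_def e1 by (simp add: sum.distrib sum_distrib_left[symmetric] h1 h2)
    qed
    also have "(\<Sum>i\<in>UNIV. A i k * w i) = (\<Sum>j\<in>UNIV. A k j * w j)" using sym by metis
    finally have q: "qf A u = lam + 2 * t * (\<Sum>j\<in>UNIV. A k j * w j) + t^2 * A k k" using wq by simp
    have e2: "(u i)^2 = (w i)^2 + 2 * t * (if i = k then w i else 0) + t^2 * (if i = k then 1 else 0)" for i
      by (simp add: u_def algebra_simps power2_eq_square)
    have s: "(\<Sum>i\<in>UNIV. (u i)^2) = 1 + 2 * t * w k + t^2"
      unfolding e2 by (simp add: sum.distrib w1 sum_distrib_left[symmetric])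
    show "2 * t * ((\<Sum>j\<in>UNIV. A k j * w j) - lam * w k) + t^2 * (A k k - lam) \<le> 0"
      using le[of u] q s by (simp add: algebra_simps)
  qed
  then show ?thesis using quad_zero by fastforce
qed

lemma perron:
  fixes A :: "'n::finite \<Rightarrow> 'n \<Rightarrow> real" and f :: real
  assumes sym: "\<And>i j. A i j = A j i"
    and lb: "\<And>i j. f^2 / real CARD('n) \<le> A i j"
    and ub: "\<And>i j. A i j \<le> 1 / real CARD('n)"
    and f: "0 < f"
  shows "\<exists>lam x. (\<forall>i. 0 < x i) \<and> (\<forall>i. (\<Sum>j\<in>UNIV. A i j * x j) = lam * x i)
     \<and> f^2 \<le> lam \<and> lam \<le> 1 \<and> (\<forall>i j. f^2 * x i \<le> x j)"
proof -
  define D where "D = real CARD('n)"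
  have D: "D > 0" by (simp add: D_def)
  have Apos: "A i j > 0" for i j using lb[of i j] D f
    by (smt (verit, best) D_def divide_pos_pos zero_less_power)
  obtain z where z1: "(\<Sum>i\<in>UNIV. (z i)^2) = 1" and zm: "\<forall>u. (\<Sum>i\<in>UNIV. (u i)^2) = 1 \<longrightarrow> qf A u \<le> qf A z"
    using exists_max by blast
  define lam where "lam = qf A z"
  have le: "qf A u \<le> lam * (\<Sum>i\<in>UNIV. (u i)^2)" for u
    using qf_le[of A lam u] zm lam_def by blast
  have lamf: "f^2 \<le> lam"
  proof -
    define u where "u i = 1 / sqrt D" for i :: 'n
    have "(\<Sum>i\<in>UNIV. (u i)^2) = 1" using D by (simp add: u_def D_def power_divide)
    then have "qf A u \<le> lam" using le[of u] by simp
    moreover have "qf A u = (\<Sum>i\<in>UNIV. \<Sum>j\<in>UNIV. A i j / D)"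
      using D by (simp add: qf_def u_def)
    moreover have "(\<Sum>i\<in>UNIV. \<Sum>j\<in>UNIV. A i j / D) \<ge> (\<Sum>i\<in>(UNIV::'n set). \<Sum>j\<in>(UNIV::'n set). f^2 / D / D)"
    proof (rule sum_mono, rule sum_mono)
      fix i j show "f^2 / D / D \<le> A i j / D" using divide_right_mono[OF lb[of i j], of D] D by (simp add: D_def)
    qed
    moreover have "(\<Sum>i\<in>(UNIV::'n set). \<Sum>j\<in>(UNIV::'n set). f^2 / D / D) = (f^2 :: real)"
      using D by (simp add: D_def)
    ultimately show ?thesis by linarith
  qed
  define w where "w i = \<bar>z i\<bar>" for i
  have w1: "(\<Sum>i\<in>UNIV. (w i)^2) = 1" using z1 by (simp add: w_def)
  have "qf A z \<le> qf A w" unfolding qf_def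
  proof (intro sum_mono)
    fix i j
    have "A i j * z i * z j \<le> \<bar>A i j * z i * z j\<bar>" by simp
    also have "\<dots> = A i j * w i * w j" using Apos[of i j] by (simp add: w_def abs_mult)
    finally show "A i j * z i * z j \<le> A i j * w i * w j" .
  qed
  then have wq: "qf A w = lam" using le[of w] w1 lam_def by simp
  have eig: "(\<Sum>j\<in>UNIV. A k j * w j) = lam * w k" for k
    using variational[OF sym le w1 wq] .
  have lampos: "lam > 0" using lamf f by (smt (verit) zero_less_power)
  have wpos: "w k > 0" for k
  proof -
    obtain j where "w j \<noteq> 0" using w1 by force
    then have "w j > 0" by (simp add: w_def)
    then have "(\<Sum>j\<in>UNIV. A k j * w j) > 0"
      using Apos by (intro sum_pos2[where i=j]) (auto simp: w_def less_imp_le)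
    then show ?thesis using eig[of k] lampos by (simp add: zero_less_mult_iff)
  qed
  define S where "S = (\<Sum>j\<in>UNIV. w j)"
  have up: "lam * w i \<le> S / D" for i
  proof -
    have "lam * w i = (\<Sum>j\<in>UNIV. A i j * w j)" using eig by simp
    also have "\<dots> \<le> (\<Sum>j\<in>UNIV. 1 / D * w j)"
      using ub wpos by (intro sum_mono mult_right_mono) (auto simp: D_def less_imp_le)
    finally show ?thesis by (simp add: S_def sum_divide_distrib)
  qed
  have lo: "f^2 * S / D \<le> lam * w i" for i
  proof -
    have "f^2 * S / D = (\<Sum>j\<in>UNIV. f^2 / D * w j)" by (simp add: S_def sum_distrib_left sum_divide_distrib)
    also have "\<dots> \<le> (\<Sum>j\<in>UNIV. A i j * w j)"
      using lb wpos by (intro sum_mono mult_right_mono) (auto simp: D_def less_imp_le)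
    finally show ?thesis using eig by simp
  qed
  have ratio: "f^2 * w i \<le> w j" for i j
  proof -
    have "lam * (f^2 * w i) \<le> f^2 * S / D" using up[of i] f
      by (smt (verit) mult.left_commute mult_left_mono times_divide_eq_right zero_le_power2)
    also have "\<dots> \<le> lam * w j" by (rule lo)
    finally show ?thesis using lampos by simp
  qed
  obtain iM where iM: "w iM = Max (range w)" proof -
    have "Max (range w) \<in> range w" by (rule Max_in) auto
    then obtain i where "Max (range w) = w i" by (rule rangeE)
    then show thesis using that by simp
  qed
  have "S \<le> D * w iM" unfolding S_def D_def
    using sum_mono[of UNIV w "\<lambda>_. w iM"] iM by simp
  then have "S / D \<le> w iM" using D by (simp add: pos_divide_le_eq mult.commute)
  then have "lam * w iM \<le> w iM" using up[of iM] by linarith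
  then have "lam \<le> 1" using wpos[of iM] by simp
  then show ?thesis using wpos eig lamf ratio by blast
qed

lemma cw_bound:
  fixes B :: "'n::finite \<Rightarrow> 'n \<Rightarrow> real" and x :: "'n \<Rightarrow> real" and c :: "'n \<Rightarrow> complex"
  assumes B0: "\<And>i j. 0 \<le> B i j" and xpos: "\<And>i. 0 < x i"
    and Bx: "\<And>i. (\<Sum>j\<in>UNIV. B i j * x j) = r * x i"
    and Bc: "\<And>i. (\<Sum>j\<in>UNIV. complex_of_real (B i j) * c j) = \<mu> * c i" and c0: "\<exists>j. c j \<noteq> 0"
  shows "cmod \<mu> \<le> r"
proof -
  define g where "g i = cmod (c i) / x i" for i
  have "Max (range g) \<in> range g" by (rule Max_in) auto
  then obtain i where gi: "Max (range g) = g i" by (rule rangeE)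
  have gmax: "g j \<le> g i" for j using gi Max_ge[of "range g" "g j"] by simp
  obtain j where "c j \<noteq> 0" using c0 by auto
  then have "g j > 0" using xpos[of j] by (simp add: g_def)
  then have gpos: "g i > 0" using gmax[of j] by linarith
  have ci: "cmod (c i) = g i * x i" using xpos[of i] by (simp add: g_def)
  then have cipos: "cmod (c i) > 0" using gpos xpos[of i] by simp
  have "cmod \<mu> * cmod (c i) = cmod (\<Sum>j\<in>UNIV. complex_of_real (B i j) * c j)"
    using Bc[of i] by (simp add: norm_mult)
  also have "\<dots> \<le> (\<Sum>j\<in>UNIV. cmod (complex_of_real (B i j) * c j))" by (rule norm_sum)
  also have "\<dots> = (\<Sum>j\<in>UNIV. B i j * cmod (c j))" using B0 by (simp add: norm_mult)
  also have "\<dots> \<le> (\<Sum>j\<in>UNIV. B i j * (g i * x j))"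
  proof (rule sum_mono)
    fix j :: 'n
    have "cmod (c j) = g j * x j" using xpos[of j] by (simp add: g_def)
    also have "\<dots> \<le> g i * x j" using gmax[of j] xpos[of j] by (simp add: mult_right_mono)
    finally show "B i j * cmod (c j) \<le> B i j * (g i * x j)" using B0 by (simp add: mult_left_mono)
  qed
  also have "\<dots> = g i * (\<Sum>j\<in>UNIV. B i j * x j)" by (simp add: sum_distrib_left algebra_simps)
  also have "\<dots> = r * cmod (c i)" using Bx[of i] ci by simp
  finally show ?thesis using cipos by simp
qed

lemma cs_sum:
  fixes x :: "'n::finite \<Rightarrow> real"
  shows "(\<Sum>j\<in>UNIV. x j)^2 \<le> real CARD('n) * (\<Sum>j\<in>UNIV. (x j)^2)"
proof -
  define D where "D = real CARD('n)"
  define S where "S = (\<Sum>j\<in>UNIV. x j)"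
  define m where "m = S / D"
  have D: "D > 0" by (simp add: D_def)
  have "(\<Sum>j\<in>UNIV. 2 * m * x j - m^2) \<le> (\<Sum>j\<in>UNIV. (x j)^2)"
  proof (rule sum_mono)
    fix j show "2 * m * x j - m^2 \<le> (x j)^2" using sum_squares_ge_zero[of "x j - m" 0]
      by (simp add: power2_eq_square algebra_simps)
  qed
  moreover have "(\<Sum>j\<in>UNIV. 2 * m * x j - m^2) = 2 * m * S - D * m^2"
    by (simp add: sum_subtractf sum_distrib_left S_def D_def)
  moreover have "2 * m * S - D * m^2 = S^2 / D" using D by (simp add: m_def field_simps power2_eq_square)
  ultimately have "S^2 / D \<le> (\<Sum>j\<in>UNIV. (x j)^2)" by linarith
  then show ?thesis using D by (simp add: S_def D_def[symmetric] pos_divide_le_eq mult.commute)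
qed

lemma gapcore:
  fixes A :: "'n::finite \<Rightarrow> 'n \<Rightarrow> real" and f :: real
  assumes lb: "\<And>i j. f^2 / real CARD('n) \<le> A i j"
    and ub: "\<And>i j. A i j \<le> 1 / real CARD('n)"
    and f: "0 < f"
    and xpos: "\<And>i. 0 < x i" and eig: "\<And>i. (\<Sum>j\<in>UNIV. A i j * x j) = lam * x i"
    and lam0: "0 \<le> lam"
    and ceig: "\<And>i. (\<Sum>j\<in>UNIV. complex_of_real (A i j) * c j) = \<mu> * c i"
    and orth: "(\<Sum>j\<in>UNIV. complex_of_real (x j) * c j) = 0" and c0: "\<exists>j. c j \<noteq> 0"
  shows "cmod \<mu> \<le> lam - f^2 * lam^2"
proof -
  define D where "D = real CARD('n)"
  have D: "D > 0" by (simp add: D_def)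
  have "Max (range x) \<in> range x" by (rule Max_in) auto
  then obtain iM where gi: "Max (range x) = x iM" by (rule rangeE)
  have xmax: "x j \<le> x iM" for j using gi Max_ge[of "range x" "x j"] by simp
  define xM where "xM = x iM"
  have xM: "xM > 0" using xpos by (simp add: xM_def)
  define t where "t = f^2 / D / xM^2"
  define N where "N = (\<Sum>j\<in>UNIV. (x j)^2)"
  define B where "B i j = A i j - t * x i * x j" for i j
  have B0: "0 \<le> B i j" for i j
  proof -
    have "x i * x j \<le> xM * xM" using xmax xpos unfolding xM_def
      by (simp add: mult_mono less_imp_le)
    moreover have "t \<ge> 0" using D by (simp add: t_def)
    ultimately have "t * (x i * x j) \<le> t * xM^2" by (simp add: power2_eq_square mult_left_mono)
    also have "\<dots> = f^2 / D" using xM by (simp add: t_def)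
    also have "\<dots> \<le> A i j" using lb by (simp add: D_def)
    finally show ?thesis by (simp add: B_def algebra_simps)
  qed
  have Bx: "(\<Sum>j\<in>UNIV. B i j * x j) = (lam - t * N) * x i" for i
    using eig[of i] by (simp add: B_def left_diff_distrib sum_subtractf N_def sum_distrib_left
        power2_eq_square algebra_simps)
  have Bc: "(\<Sum>j\<in>UNIV. complex_of_real (B i j) * c j) = \<mu> * c i" for i
  proof -
    have "(\<Sum>j\<in>UNIV. complex_of_real (B i j) * c j) =
      (\<Sum>j\<in>UNIV. complex_of_real (A i j) * c j) - complex_of_real (t * x i) * (\<Sum>j\<in>UNIV. complex_of_real (x j) * c j)"
      by (simp add: B_def left_diff_distrib sum_subtractf sum_distrib_left algebra_simps)
    then show ?thesis using ceig orth by simp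
  qed
  have bound: "cmod \<mu> \<le> lam - t * N" by (rule cw_bound[OF B0 xpos Bx Bc c0])
  define S where "S = (\<Sum>j\<in>UNIV. x j)"
  have "lam * xM \<le> S / D"
  proof -
    have "lam * xM = (\<Sum>j\<in>UNIV. A iM j * x j)" using eig by (simp add: xM_def)
    also have "\<dots> \<le> (\<Sum>j\<in>UNIV. 1 / D * x j)"
      using ub xpos by (intro sum_mono mult_right_mono) (auto simp: D_def less_imp_le)
    finally show ?thesis by (simp add: S_def sum_divide_distrib)
  qed
  then have l1: "lam \<le> S / (D * xM)" using xM D by (simp add: field_simps)
  have "S^2 \<le> D * N" using cs_sum[of x] by (simp add: S_def D_def N_def)
  then have "(S / (D * xM))^2 \<le> N / (D * xM^2)" using D xM
    by (simp add: power_divide power_mult_distrib field_simps power2_eq_square)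
  moreover have "lam^2 \<le> (S / (D * xM))^2" using l1 lam0 by (simp add: power_mono)
  ultimately have "lam^2 \<le> N / (D * xM^2)" by linarith
  then have "f^2 * lam^2 \<le> f^2 * (N / (D * xM^2))" by (rule mult_left_mono) simp
  also have "\<dots> = t * N" by (simp add: t_def)
  finally show ?thesis using bound by linarith
qed

lemma herm_real:
  fixes A :: "'n::finite \<Rightarrow> 'n \<Rightarrow> real"
  assumes sym: "\<And>i j. A i j = A j i"
    and ceig: "\<And>i. (\<Sum>j\<in>UNIV. complex_of_real (A i j) * c j) = \<mu> * c i"
    and c0: "\<exists>j. c j \<noteq> 0"
  shows "\<mu> \<in> \<real>"
proof -
  define T where "T = (\<Sum>i\<in>UNIV. \<Sum>j\<in>UNIV. complex_of_real (A i j) * cnj (c i) * c j)"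
  define Nc where "Nc = (\<Sum>i\<in>UNIV. cnj (c i) * c i)"
  have T1: "T = \<mu> * Nc"
  proof -
    have "T = (\<Sum>i\<in>UNIV. cnj (c i) * (\<Sum>j\<in>UNIV. complex_of_real (A i j) * c j))"
      by (simp add: T_def sum_distrib_left algebra_simps)
    also have "\<dots> = \<mu> * Nc" using ceig by (simp add: Nc_def sum_distrib_left algebra_simps)
    finally show ?thesis .
  qed
  have T2: "cnj T = T"
  proof -
    have "cnj T = (\<Sum>i\<in>UNIV. \<Sum>j\<in>UNIV. complex_of_real (A i j) * c i * cnj (c j))"
      by (simp add: T_def)
    also have "\<dots> = (\<Sum>j\<in>UNIV. \<Sum>i\<in>UNIV. complex_of_real (A i j) * c i * cnj (c j))"
      by (rule sum.swap)
    also have "\<dots> = T" unfolding T_def using sym by (simp add: algebra_simps)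
    finally show ?thesis .
  qed
  have N1: "Nc = complex_of_real (\<Sum>i\<in>UNIV. (cmod (c i))^2)"
  proof -
    have "cnj (c i) * c i = complex_of_real ((cmod (c i))^2)" for i
      by (metis complex_norm_square mult.commute of_real_power)
    then show ?thesis by (simp add: Nc_def)
  qed
  obtain j where "c j \<noteq> 0" using c0 by auto
  then have "(\<Sum>i\<in>UNIV. (cmod (c i))^2) > 0"
    by (intro sum_pos2[where i=j]) auto
  then have Nc0: "Nc \<noteq> 0" using N1 by (metis less_irrefl of_real_eq_0_iff)
  have Ncr: "cnj Nc = Nc" unfolding N1 by (rule complex_cnj_complex_of_real)
  have "cnj \<mu> * Nc = \<mu> * Nc" using T1 T2 Ncr by (metis complex_cnj_mult)
  then have "cnj \<mu> = \<mu>" using Nc0 by simp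
  then show ?thesis using Reals_cnj_iff by blast
qed

lemma spectral_A:
  fixes A :: "'n::finite \<Rightarrow> 'n \<Rightarrow> real" and f :: real
  assumes sym: "\<And>i j. A i j = A j i"
    and lb: "\<And>i j. f^2 / real CARD('n) \<le> A i j"
    and ub: "\<And>i j. A i j \<le> 1 / real CARD('n)"
    and f: "0 < f"
    and xpos: "\<And>i. 0 < x i" and eig: "\<And>i. (\<Sum>j\<in>UNIV. A i j * x j) = lam * x i"
    and lamf: "f^2 \<le> lam"
    and ceig: "\<And>i. (\<Sum>j\<in>UNIV. complex_of_real (A i j) * c j) = \<mu> * c i"
    and c0: "\<exists>j. c j \<noteq> 0"
  shows "\<mu> \<in> \<real> \<and> (\<mu> = complex_of_real lam \<longrightarrow> (\<exists>k. \<forall>i. c i = k * complex_of_real (x i)))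
     \<and> (\<mu> \<noteq> complex_of_real lam \<longrightarrow> cmod \<mu> \<le> (1 - f^4) * lam)"
proof -
  have lampos: "lam > 0" using lamf f by (smt (verit) zero_less_power)
  have gapstrict: "lam - f^2 * lam^2 < lam" using lampos f by simp
  have gapf: "lam - f^2 * lam^2 \<le> (1 - f^4) * lam"
  proof -
    have "f^2 * f^2 \<le> f^2 * lam" using mult_left_mono[OF lamf, of "f^2"] by simp
    moreover have "f^4 = f^2 * f^2" by simp
    ultimately have "f^4 * lam \<le> f^2 * lam * lam" using lampos by (metis mult_right_mono less_imp_le)
    then show ?thesis by (simp add: algebra_simps power2_eq_square)
  qed
  have ortho_rel: "\<mu> * (\<Sum>j\<in>UNIV. complex_of_real (x j) * d j) = complex_of_real lam * (\<Sum>j\<in>UNIV. complex_of_real (x j) * d j)"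
    if deig: "\<And>i. (\<Sum>j\<in>UNIV. complex_of_real (A i j) * d j) = \<mu> * d i" for d :: "'n \<Rightarrow> complex"
  proof -
    have "\<mu> * (\<Sum>j\<in>UNIV. complex_of_real (x j) * d j) = (\<Sum>i\<in>UNIV. complex_of_real (x i) * (\<Sum>j\<in>UNIV. complex_of_real (A i j) * d j))"
      using deig by (simp add: sum_distrib_left algebra_simps)
    also have "\<dots> = (\<Sum>i\<in>UNIV. \<Sum>j\<in>UNIV. complex_of_real (A j i * x i) * d j)"
      using sym by (simp add: sum_distrib_left algebra_simps)
    also have "\<dots> = (\<Sum>j\<in>UNIV. \<Sum>i\<in>UNIV. complex_of_real (A j i * x i) * d j)"
      by (rule sum.swap)
    also have "\<dots> = (\<Sum>j\<in>UNIV. complex_of_real (\<Sum>i\<in>UNIV. A j i * x i) * d j)"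
      by (simp add: sum_distrib_right)
    also have "\<dots> = complex_of_real lam * (\<Sum>j\<in>UNIV. complex_of_real (x j) * d j)"
      using eig by (simp add: sum_distrib_left algebra_simps)
    finally show ?thesis .
  qed
  have real: "\<mu> \<in> \<real>" by (rule herm_real[OF sym ceig c0])
  have part2: "\<exists>k. \<forall>i. c i = k * complex_of_real (x i)" if mu: "\<mu> = complex_of_real lam"
  proof -
    define N where "N = (\<Sum>j\<in>UNIV. (x j)^2)"
    obtain j0 :: 'n where True by simp
    have N: "N > 0" unfolding N_def using xpos by (intro sum_pos2[where i=j0]) (auto simp: less_imp_neq[symmetric])
    define k where "k = (\<Sum>j\<in>UNIV. complex_of_real (x j) * c j) / complex_of_real N"
    define d where "d i = c i - k * complex_of_real (x i)" for i
    have deig: "(\<Sum>j\<in>UNIV. complex_of_real (A i j) * d j) = \<mu> * d i" for i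
    proof -
      have "(\<Sum>j\<in>UNIV. complex_of_real (A i j) * d j) =
          (\<Sum>j\<in>UNIV. complex_of_real (A i j) * c j) - k * complex_of_real (\<Sum>j\<in>UNIV. A i j * x j)"
        by (simp add: d_def right_diff_distrib sum_subtractf sum_distrib_left algebra_simps)
      also have "\<dots> = \<mu> * c i - k * complex_of_real (lam * x i)" using ceig[of i] eig[of i] by simp
      finally show ?thesis using mu by (simp add: d_def algebra_simps)
    qed
    have dorth: "(\<Sum>j\<in>UNIV. complex_of_real (x j) * d j) = 0"
    proof -
      have "(\<Sum>j\<in>UNIV. complex_of_real (x j) * d j) =
         (\<Sum>j\<in>UNIV. complex_of_real (x j) * c j) - k * complex_of_real N"
        by (simp add: d_def N_def right_diff_distrib sum_subtractf sum_distrib_left algebra_simps power2_eq_square)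
      then show ?thesis using N by (simp add: k_def)
    qed
    have "\<not> (\<exists>j. d j \<noteq> 0)"
    proof
      assume "\<exists>j. d j \<noteq> 0"
      from gapcore[OF lb ub f xpos eig _ deig dorth this] lampos
      have "cmod \<mu> \<le> lam - f^2 * lam^2" by simp
      then show False using mu gapstrict lampos by simp
    qed
    then show ?thesis by (auto simp: d_def)
  qed
  have part3: "cmod \<mu> \<le> (1 - f^4) * lam" if mu: "\<mu> \<noteq> complex_of_real lam"
  proof -
    have "(\<Sum>j\<in>UNIV. complex_of_real (x j) * c j) = 0" using ortho_rel[OF ceig] mu by simp
    from gapcore[OF lb ub f xpos eig _ ceig this c0] lampos
    have "cmod \<mu> \<le> lam - f^2 * lam^2" by simp
    then show ?thesis using gapf by linarith
  qed
  show ?thesis using real part2 part3 by blast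
qed


definition ip :: "complex ^ 'm \<Rightarrow> complex ^ 'm \<Rightarrow> complex" where
  "ip u w = (\<Sum>q\<in>UNIV. cnj (u $ q) * w $ q)"

lemma ip_tensor: "ip (tensor u u) (tensor v v) = (\<Sum>i\<in>UNIV. cnj (u$i) * v$i)^2"
proof -
  have "ip (tensor u u) (tensor v v) = (\<Sum>p\<in>UNIV \<times> UNIV. cnj (u $ fst p * u $ snd p) * (v $ fst p * v $ snd p))"
    by (simp add: ip_def tensor_def UNIV_Times_UNIV)
  also have "\<dots> = (\<Sum>i\<in>UNIV. \<Sum>j\<in>UNIV. (cnj (u$i) * v$i) * (cnj (u$j) * v$j))"
    by (simp add: sum.cartesian_product split_def algebra_simps)
  also have "\<dots> = (\<Sum>i\<in>UNIV. cnj (u$i) * v$i)^2"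
    by (simp add: power2_eq_square sum_product)
  finally show ?thesis .
qed

lemma ip_e: "orthonormal_family b \<Longrightarrow> ip (tensor (b \<alpha>) (b \<alpha>)) (tensor (b \<beta>) (b \<beta>)) = (if \<alpha> = \<beta> then 1 else 0)"
  unfolding ip_tensor orthonormal_family_def by simp

lemma ip_smult: "ip u (c *s w) = c * ip u w"
  by (simp add: ip_def sum_distrib_left algebra_simps)

lemma ip_sum_e:
  assumes "orthonormal_family b"
  shows "ip (tensor (b \<gamma>) (b \<gamma>)) (\<Sum>\<alpha>\<in>UNIV. c \<alpha> *s tensor (b \<alpha>) (b \<alpha>)) = c \<gamma>"
proof -
  have "ip (tensor (b \<gamma>) (b \<gamma>)) (\<Sum>\<alpha>\<in>UNIV. c \<alpha> *s tensor (b \<alpha>) (b \<alpha>))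
      = (\<Sum>\<alpha>\<in>UNIV. c \<alpha> * ip (tensor (b \<gamma>) (b \<gamma>)) (tensor (b \<alpha>) (b \<alpha>)))"
  proof -
    have "ip (tensor (b \<gamma>) (b \<gamma>)) (\<Sum>\<alpha>\<in>UNIV. c \<alpha> *s tensor (b \<alpha>) (b \<alpha>))
      = (\<Sum>q\<in>UNIV. \<Sum>\<alpha>\<in>UNIV. cnj (tensor (b \<gamma>) (b \<gamma>) $ q) * (c \<alpha> * tensor (b \<alpha>) (b \<alpha>) $ q))"
      by (simp add: ip_def sum_distrib_left)
    also have "\<dots> = (\<Sum>\<alpha>\<in>UNIV. \<Sum>q\<in>UNIV. cnj (tensor (b \<gamma>) (b \<gamma>) $ q) * (c \<alpha> * tensor (b \<alpha>) (b \<alpha>) $ q))"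
      by (rule sum.swap)
    also have "\<dots> = (\<Sum>\<alpha>\<in>UNIV. c \<alpha> * ip (tensor (b \<gamma>) (b \<gamma>)) (tensor (b \<alpha>) (b \<alpha>)))"
      by (simp add: ip_def sum_distrib_left mult.left_commute)
    finally show ?thesis .
  qed
  also have "\<dots> = (\<Sum>\<alpha>\<in>UNIV. if \<gamma> = \<alpha> then c \<gamma> else 0)"
    by (rule sum.cong[OF refl]) (simp add: ip_e[OF assms])
  also have "\<dots> = c \<gamma>" by simp
  finally show ?thesis .
qed

lemma mat_scaleR_comp: "((r::real) *\<^sub>R (M :: complex^'m^'k)) $ i $ j = complex_of_real r * M $ i $ j"
  by (simp only: vector_scaleR_component) (simp add: scaleR_conv_of_real)

lemma Kmul:
  fixes F :: "real ^ 'n ^ 'n" and b :: "'n::finite \<Rightarrow> complex ^ 'n"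
  shows "Kop F b *v w = (\<Sum>\<alpha>\<in>UNIV. (\<Sum>\<beta>\<in>UNIV. complex_of_real ((F $ \<alpha> $ \<beta>)\<^sup>2 / real CARD('n))
          * ip (tensor (b \<beta>) (b \<beta>)) w) *s tensor (b \<alpha>) (b \<alpha>))"
proof -
  let ?e = "\<lambda>\<alpha>. tensor (b \<alpha>) (b \<alpha>)"
  let ?A = "\<lambda>\<alpha> \<beta>. (F $ \<alpha> $ \<beta>)\<^sup>2 / real CARD('n)"
  show ?thesis
  proof (subst vec_eq_iff, rule allI)
    fix p
    have "(Kop F b *v w) $ p = (\<Sum>q\<in>UNIV. (\<Sum>\<alpha>\<in>UNIV. \<Sum>\<beta>\<in>UNIV. complex_of_real (?A \<alpha> \<beta>) * (?e \<alpha> $ p * cnj (?e \<beta> $ q))) * w $ q)"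
      by (simp add: matrix_vector_mult_def Kop_def outer_def) (simp add: scaleR_conv_of_real)
    also have "\<dots> = (\<Sum>\<alpha>\<in>UNIV. \<Sum>\<beta>\<in>UNIV. \<Sum>q\<in>UNIV. complex_of_real (?A \<alpha> \<beta>) * (?e \<alpha> $ p * cnj (?e \<beta> $ q)) * w $ q)"
    proof -
      have "(\<Sum>q\<in>UNIV. (\<Sum>\<alpha>\<in>UNIV. \<Sum>\<beta>\<in>UNIV. complex_of_real (?A \<alpha> \<beta>) * (?e \<alpha> $ p * cnj (?e \<beta> $ q))) * w $ q)
         = (\<Sum>q\<in>UNIV. \<Sum>\<alpha>\<in>UNIV. \<Sum>\<beta>\<in>UNIV. complex_of_real (?A \<alpha> \<beta>) * (?e \<alpha> $ p * cnj (?e \<beta> $ q)) * w $ q)"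
        by (simp add: sum_distrib_right)
      also have "\<dots> = (\<Sum>\<alpha>\<in>UNIV. \<Sum>q\<in>UNIV. \<Sum>\<beta>\<in>UNIV. complex_of_real (?A \<alpha> \<beta>) * (?e \<alpha> $ p * cnj (?e \<beta> $ q)) * w $ q)"
        by (rule sum.swap)
      also have "\<dots> = (\<Sum>\<alpha>\<in>UNIV. \<Sum>\<beta>\<in>UNIV. \<Sum>q\<in>UNIV. complex_of_real (?A \<alpha> \<beta>) * (?e \<alpha> $ p * cnj (?e \<beta> $ q)) * w $ q)"
        by (rule sum.cong[OF refl], rule sum.swap)
      finally show ?thesis .
    qed
    also have "\<dots> = (\<Sum>\<alpha>\<in>UNIV. (\<Sum>\<beta>\<in>UNIV. complex_of_real (?A \<alpha> \<beta>) * ip (?e \<beta>) w) * ?e \<alpha> $ p)"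
      by (simp add: ip_def sum_distrib_left sum_distrib_right algebra_simps)
    also have "\<dots> = (\<Sum>\<alpha>\<in>UNIV. (\<Sum>\<beta>\<in>UNIV. complex_of_real (?A \<alpha> \<beta>) * ip (?e \<beta>) w) *s ?e \<alpha>) $ p"
      by simp
    finally show "(Kop F b *v w) $ p = (\<Sum>\<alpha>\<in>UNIV. (\<Sum>\<beta>\<in>UNIV. complex_of_real (?A \<alpha> \<beta>) * ip (?e \<beta>) w) *s ?e \<alpha>) $ p" .
  qed
qed

lemma sum_delta_mult: "(\<Sum>j\<in>(UNIV::'m::finite set). v j * (if i = j then c else 0)) = (c::complex) * v i"
proof -
  have "(\<Sum>j\<in>(UNIV::'m set). v j * (if i = j then c else 0)) = (\<Sum>j\<in>UNIV. if i = j then v j * c else 0)"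
    by (rule sum.cong) auto
  then show ?thesis by (simp add: mult.commute)
qed

lemma Mmul0: "((a::real) *\<^sub>R mat 1 + (r::real) *\<^sub>R K) $ i $ j = (if i = j then complex_of_real a else 0) + complex_of_real r * (K :: complex^'m^'m) $ i $ j"
  by (simp add: mat_def) (simp add: scaleR_conv_of_real)

lemma Mmul: "((a::real) *\<^sub>R mat 1 + (r::real) *\<^sub>R K) *v (v :: complex^'m) = complex_of_real a *s v + complex_of_real r *s (K *v v)"
proof (subst vec_eq_iff, rule allI)
  fix i
  have "(((a::real) *\<^sub>R mat 1 + (r::real) *\<^sub>R K) *v v) $ i = (\<Sum>j\<in>UNIV. ((a *\<^sub>R mat 1 + r *\<^sub>R K) $ i $ j) * v $ j)"
    by (simp only: matrix_vector_mult_def vec_lambda_beta)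
  also have "\<dots> = (\<Sum>j\<in>UNIV. ((if i = j then complex_of_real a else 0) + complex_of_real r * K $ i $ j) * v $ j)"
    by (simp only: Mmul0)
  also have "\<dots> = (complex_of_real a *s v + complex_of_real r *s (K *v v)) $ i"
    by (simp add: ring_distribs sum.distrib sum_distrib_left mult.assoc mult.left_commute mult.commute matrix_vector_mult_def)
      (simp add: sum_delta_mult)
  finally show "(((a::real) *\<^sub>R mat 1 + (r::real) *\<^sub>R K) *v v) $ i = (complex_of_real a *s v + complex_of_real r *s (K *v v)) $ i" .
qed



lemma smult_sum_vec: "(k::complex) *s (\<Sum>\<alpha>\<in>UNIV. g \<alpha> *s (e \<alpha> :: complex^'m)) = (\<Sum>\<alpha>\<in>UNIV. (k * g \<alpha>) *s e \<alpha>)"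
  by (simp add: vec_eq_iff sum_distrib_left mult.assoc)

theorem mainTheorem7:
  fixes F :: "real ^ 'n ^ 'n" and f :: real and b :: "'n::finite \<Rightarrow> complex ^ 'n"
  assumes f_pos: "0 < f" and f_le1: "f \<le> 1"
    and F_sym: "\<And>\<alpha> \<beta>. F $ \<alpha> $ \<beta> = F $ \<beta> $ \<alpha>"
    and F_bounds: "\<And>\<alpha> \<beta>. f \<le> F $ \<alpha> $ \<beta> \<and> F $ \<alpha> $ \<beta> \<le> 1"
    and onb: "orthonormal_family b"
  shows "\<exists>(lam::real) (x :: 'n \<Rightarrow> real).
     let K = Kop F b;
         \<Psi> = (\<Sum>\<alpha>\<in>UNIV. complex_of_real (x \<alpha>) *s tensor (b \<alpha>) (b \<alpha>))
     in is_eigenpair K (complex_of_real lam) \<Psi>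
      \<and> (\<forall>\<alpha>. 0 < x \<alpha>)
      \<and> Max (range x) / Min (range x) \<le> 1 / f\<^sup>2
      \<and> f\<^sup>2 \<le> lam \<and> lam \<le> 1
      \<and> (\<forall>v. is_eigenpair K (complex_of_real lam) v \<longrightarrow> (\<exists>c::complex. v = c *s \<Psi>))
      \<and> (\<forall>\<mu> v. is_eigenpair K \<mu> v \<and> \<mu> \<noteq> complex_of_real lam \<longrightarrow>
               \<mu> \<in> \<real> \<and> Re \<mu> \<le> (1 - f ^ 4) * lam)
      \<and> (\<forall>(a::real) (\<epsilon>::real). 0 < \<epsilon> \<longrightarrow>
           (let M = a *\<^sub>R mat 1 + \<epsilon>\<^sup>2 *\<^sub>R K
            in is_eigenpair M (complex_of_real (a + \<epsilon>\<^sup>2 * lam)) \<Psi>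
             \<and> (\<forall>v. is_eigenpair M (complex_of_real (a + \<epsilon>\<^sup>2 * lam)) v \<longrightarrow>
                     (\<exists>c::complex. v = c *s \<Psi>))
             \<and> (\<forall>\<mu> v. is_eigenpair M \<mu> v \<and> \<mu> \<noteq> complex_of_real (a + \<epsilon>\<^sup>2 * lam) \<longrightarrow>
                     \<mu> \<in> \<real> \<and> Re \<mu> \<le> (a + \<epsilon>\<^sup>2 * lam) - \<epsilon>\<^sup>2 * f ^ 4 * lam)))"
proof -
  define A where "A \<alpha> \<beta> = (F $ \<alpha> $ \<beta>)\<^sup>2 / real CARD('n)" for \<alpha> \<beta>
  have Asym: "A i j = A j i" for i j using F_sym by (simp add: A_def)
  have Alb: "f^2 / real CARD('n) \<le> A i j" for i j
  proof -
    have "f^2 \<le> (F $ i $ j)\<^sup>2" using F_bounds[of i j] f_pos by (simp add: power_mono)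
    then show ?thesis by (simp add: A_def divide_right_mono)
  qed
  have Aub: "A i j \<le> 1 / real CARD('n)" for i j
  proof -
    have "(F $ i $ j)\<^sup>2 \<le> 1" using F_bounds[of i j] f_pos
      by (smt (verit) power_le_one)
    then show ?thesis by (simp add: A_def divide_right_mono)
  qed
  obtain lam x where xpos: "\<forall>i. 0 < x i" and eig: "\<forall>i. (\<Sum>j\<in>UNIV. A i j * x j) = lam * x i"
    and lamf: "f^2 \<le> lam" and lam1: "lam \<le> 1" and ratio: "\<forall>i j. f^2 * x i \<le> x j"
    using perron[where A=A and f=f, OF Asym Alb Aub f_pos] by blast
  have lampos: "lam > 0" using lamf f_pos by (smt (verit) zero_less_power)
  define e where "e \<alpha> = tensor (b \<alpha>) (b \<alpha>)" for \<alpha>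
  define \<Psi> where "\<Psi> = (\<Sum>\<alpha>\<in>UNIV. complex_of_real (x \<alpha>) *s e \<alpha>)"
  define K where "K = Kop F b"
  have Kmul': "K *v w = (\<Sum>\<alpha>\<in>UNIV. (\<Sum>\<beta>\<in>UNIV. complex_of_real (A \<alpha> \<beta>) * ip (e \<beta>) w) *s e \<alpha>)" for w
    unfolding K_def A_def e_def by (rule Kmul)
  have ipsum: "ip (e \<gamma>) (\<Sum>\<alpha>\<in>UNIV. c \<alpha> *s e \<alpha>) = c \<gamma>" for \<gamma> c
    unfolding e_def by (rule ip_sum_e[OF onb])
  have ipPsi: "ip (e \<gamma>) \<Psi> = complex_of_real (x \<gamma>)" for \<gamma>
    unfolding \<Psi>_def by (rule ipsum)
  have Psi0: "\<Psi> \<noteq> 0"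
  proof
    assume "\<Psi> = 0"
    then have "ip (e \<gamma>) \<Psi> = 0" for \<gamma> by (simp add: ip_def)
    then show False using ipPsi xpos by (metis less_irrefl of_real_eq_0_iff)
  qed
  have KPsi: "K *v \<Psi> = complex_of_real lam *s \<Psi>"
  proof -
    have "K *v \<Psi> = (\<Sum>\<alpha>\<in>UNIV. complex_of_real (\<Sum>\<beta>\<in>UNIV. A \<alpha> \<beta> * x \<beta>) *s e \<alpha>)"
      unfolding Kmul' ipPsi by simp
    also have "\<dots> = (\<Sum>\<alpha>\<in>UNIV. (complex_of_real lam * complex_of_real (x \<alpha>)) *s e \<alpha>)"
      using eig by simp
    also have "\<dots> = complex_of_real lam *s \<Psi>" unfolding \<Psi>_def by (rule smult_sum_vec[symmetric])
    finally show ?thesis .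
  qed
  have eigPsi: "is_eigenpair K (complex_of_real lam) \<Psi>" using Psi0 KPsi by (simp add: is_eigenpair_def)
  have eigK: "\<mu> \<in> \<real> \<and> (\<mu> = complex_of_real lam \<longrightarrow> (\<exists>k. v = k *s \<Psi>))
      \<and> (\<mu> \<noteq> complex_of_real lam \<longrightarrow> Re \<mu> \<le> (1 - f^4) * lam)"
    if ep: "is_eigenpair K \<mu> v" for \<mu> v
  proof -
    have v0: "v \<noteq> 0" and Kv: "K *v v = \<mu> *s v" using ep by (auto simp: is_eigenpair_def)
    define c where "c \<beta> = ip (e \<beta>) v" for \<beta>
    have Kvc: "K *v v = (\<Sum>\<alpha>\<in>UNIV. (\<Sum>\<beta>\<in>UNIV. complex_of_real (A \<alpha> \<beta>) * c \<beta>) *s e \<alpha>)"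
      unfolding Kmul' c_def ..
    have cA: "(\<Sum>\<beta>\<in>UNIV. complex_of_real (A \<gamma> \<beta>) * c \<beta>) = \<mu> * c \<gamma>" for \<gamma>
    proof -
      have "ip (e \<gamma>) (K *v v) = (\<Sum>\<beta>\<in>UNIV. complex_of_real (A \<gamma> \<beta>) * c \<beta>)"
        unfolding Kvc by (rule ipsum)
      moreover have "ip (e \<gamma>) (K *v v) = \<mu> * c \<gamma>" unfolding Kv ip_smult c_def ..
      ultimately show ?thesis by simp
    qed
    have vrep: "v = (\<Sum>\<alpha>\<in>UNIV. c \<alpha> *s e \<alpha>)" if mu0: "\<mu> \<noteq> 0"
    proof -
      have "\<mu> *s v = (\<Sum>\<alpha>\<in>UNIV. (\<mu> * c \<alpha>) *s e \<alpha>)" using Kv Kvc cA by simp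
      also have "\<dots> = \<mu> *s (\<Sum>\<alpha>\<in>UNIV. c \<alpha> *s e \<alpha>)" by (rule smult_sum_vec[symmetric])
      finally show ?thesis using mu0 by simp
    qed
    show ?thesis
    proof (cases "\<exists>j. c j \<noteq> 0")
      case True
      have sp: "\<mu> \<in> \<real> \<and> (\<mu> = complex_of_real lam \<longrightarrow> (\<exists>k. \<forall>i. c i = k * complex_of_real (x i)))
          \<and> (\<mu> \<noteq> complex_of_real lam \<longrightarrow> cmod \<mu> \<le> (1 - f^4) * lam)"
        using spectral_A[where A=A and f=f and x=x and lam=lam and c=c and \<mu>=\<mu>, OF Asym Alb Aub f_pos _ _ lamf cA True] xpos eig by blast
      have p2: "\<exists>k. v = k *s \<Psi>" if mu: "\<mu> = complex_of_real lam"
      proof -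
        obtain k where k: "\<forall>i. c i = k * complex_of_real (x i)" using sp mu by blast
        have "\<mu> \<noteq> 0" using mu lampos by simp
        then have "v = (\<Sum>\<alpha>\<in>UNIV. c \<alpha> *s e \<alpha>)" by (rule vrep)
        also have "\<dots> = k *s \<Psi>" unfolding \<Psi>_def smult_sum_vec using k by simp
        finally show ?thesis by blast
      qed
      have p3: "Re \<mu> \<le> (1 - f^4) * lam" if mu: "\<mu> \<noteq> complex_of_real lam"
        using sp mu complex_Re_le_cmod[of \<mu>] by linarith
      show ?thesis using sp p2 p3 by blast
    next
      case False
      then have "K *v v = 0" unfolding Kvc by simp
      then have mu0: "\<mu> = 0" using Kv v0 by simp
      have "f^4 \<le> 1" using f_pos f_le1 by (simp add: power_le_one)
      then have "0 \<le> (1 - f^4) * lam" using lampos by simp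
      then show ?thesis using mu0 lampos by simp
    qed
  qed
  have Mred: "is_eigenpair (a *\<^sub>R mat 1 + \<epsilon>\<^sup>2 *\<^sub>R K) \<nu> v \<longleftrightarrow>
      is_eigenpair K ((\<nu> - complex_of_real a) / complex_of_real (\<epsilon>\<^sup>2)) v" if eps: "0 < \<epsilon>" for a \<epsilon> \<nu> v
  proof -
    have e0: "complex_of_real (\<epsilon>\<^sup>2) \<noteq> 0" using eps by simp
    have "(a *\<^sub>R mat 1 + \<epsilon>\<^sup>2 *\<^sub>R K) *v v = \<nu> *s v \<longleftrightarrow>
        complex_of_real a *s v + complex_of_real (\<epsilon>\<^sup>2) *s (K *v v) = \<nu> *s v"
      by (simp add: Mmul)
    also have "\<dots> \<longleftrightarrow> K *v v = ((\<nu> - complex_of_real a) / complex_of_real (\<epsilon>\<^sup>2)) *s v"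
      using e0 by (auto simp: vec_eq_iff field_simps)
    finally show ?thesis by (simp add: is_eigenpair_def)
  qed
  have Mmax: "Max (range x) / Min (range x) \<le> 1 / f\<^sup>2"
  proof -
    have "Max (range x) \<in> range x" by (rule Max_in) auto
    then obtain i where i: "Max (range x) = x i" by (rule rangeE)
    have "Min (range x) \<in> range x" by (rule Min_in) auto
    then obtain j where j: "Min (range x) = x j" by (rule rangeE)
    have "f^2 * x i \<le> x j" using ratio by blast
    then show ?thesis using i j xpos f_pos by (simp add: field_simps)
  qed
  have Mpart: "is_eigenpair (a *\<^sub>R mat 1 + \<epsilon>\<^sup>2 *\<^sub>R K) (complex_of_real (a + \<epsilon>\<^sup>2 * lam)) \<Psi>
      \<and> (\<forall>v. is_eigenpair (a *\<^sub>R mat 1 + \<epsilon>\<^sup>2 *\<^sub>R K) (complex_of_real (a + \<epsilon>\<^sup>2 * lam)) v \<longrightarrow> (\<exists>c. v = c *s \<Psi>))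
      \<and> (\<forall>\<mu> v. is_eigenpair (a *\<^sub>R mat 1 + \<epsilon>\<^sup>2 *\<^sub>R K) \<mu> v \<and> \<mu> \<noteq> complex_of_real (a + \<epsilon>\<^sup>2 * lam) \<longrightarrow>
                     \<mu> \<in> \<real> \<and> Re \<mu> \<le> (a + \<epsilon>\<^sup>2 * lam) - \<epsilon>\<^sup>2 * f ^ 4 * lam)"
    if eps: "0 < \<epsilon>" for a \<epsilon> :: real
  proof (intro conjI allI impI)
    have e0: "complex_of_real (\<epsilon>\<^sup>2) \<noteq> 0" using eps by simp
    have lamc: "(complex_of_real (a + \<epsilon>\<^sup>2 * lam) - complex_of_real a) / complex_of_real (\<epsilon>\<^sup>2) = complex_of_real lam"
      using e0 by (simp add: field_simps)
    show "is_eigenpair (a *\<^sub>R mat 1 + \<epsilon>\<^sup>2 *\<^sub>R K) (complex_of_real (a + \<epsilon>\<^sup>2 * lam)) \<Psi>"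
      using Mred[OF eps] lamc eigPsi by simp
    show "\<exists>c. v = c *s \<Psi>" if "is_eigenpair (a *\<^sub>R mat 1 + \<epsilon>\<^sup>2 *\<^sub>R K) (complex_of_real (a + \<epsilon>\<^sup>2 * lam)) v" for v
    proof -
      have "is_eigenpair K ((complex_of_real (a + \<epsilon>\<^sup>2 * lam) - complex_of_real a) / complex_of_real (\<epsilon>\<^sup>2)) v"
        using that Mred[OF eps] by blast
      then have "is_eigenpair K (complex_of_real lam) v" by (simp only: lamc)
      then show ?thesis using eigK by blast
    qed
    fix \<mu> v assume H: "is_eigenpair (a *\<^sub>R mat 1 + \<epsilon>\<^sup>2 *\<^sub>R K) \<mu> v \<and> \<mu> \<noteq> complex_of_real (a + \<epsilon>\<^sup>2 * lam)"
    define \<nu> where "\<nu> = (\<mu> - complex_of_real a) / complex_of_real (\<epsilon>\<^sup>2)"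
    have mu: "\<mu> = complex_of_real a + complex_of_real (\<epsilon>\<^sup>2) * \<nu>" using e0 by (simp add: \<nu>_def field_simps)
    have epK: "is_eigenpair K \<nu> v" using H Mred[OF eps] \<nu>_def by blast
    have nl: "\<nu> \<noteq> complex_of_real lam" using H mu by auto
    have nu: "\<nu> \<in> \<real>" "Re \<nu> \<le> (1 - f^4) * lam" using eigK[OF epK] nl by auto
    show "\<mu> \<in> \<real>" using nu(1) mu by (simp add: Reals_add Reals_mult)
    have "Re \<mu> = a + \<epsilon>\<^sup>2 * Re \<nu>" using mu by simp
    also have "\<dots> \<le> a + \<epsilon>\<^sup>2 * ((1 - f^4) * lam)" using nu(2) by (simp add: mult_left_mono)
    finally show "Re \<mu> \<le> a + \<epsilon>\<^sup>2 * lam - \<epsilon>\<^sup>2 * f ^ 4 * lam" by (simp add: algebra_simps)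
  qed
  have eigK2: "\<forall>v. is_eigenpair K (complex_of_real lam) v \<longrightarrow> (\<exists>c::complex. v = c *s \<Psi>)"
    using eigK by blast
  have eigK3: "\<forall>\<mu> v. is_eigenpair K \<mu> v \<and> \<mu> \<noteq> complex_of_real lam \<longrightarrow>
               \<mu> \<in> \<real> \<and> Re \<mu> \<le> (1 - f ^ 4) * lam"
    using eigK by blast
  show ?thesis
    apply (rule exI[of _ lam], rule exI[of _ x])
    apply (unfold Let_def)
    apply (fold K_def)
    apply (fold e_def)
    apply (fold \<Psi>_def)
    apply (intro conjI)
           apply (rule eigPsi)
          apply (rule xpos)
         apply (rule Mmax)
        apply (rule lamf)
       apply (rule lam1)
      apply (rule eigK2)
     apply (rule eigK3)
    apply (intro allI impI)
    apply (rule Mpart)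
    apply assumption
    done
qed

end
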